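(* Let $t\geq 2$ be an integer and $H=K_{t,t}$. Then there are a positive constant $c$ and an integer $n_0$ such that for every $n>n_0$, $$\mathrm{IR}(H, K_{1,n}) \leq n + c\, n^{1-\frac{1}{2t}}.$$
   Context: All graphs are finite and simple. $K_{t,t}$ is the complete bipartite graph with both parts of size $t$; $K_{1,n}$ is the star with $n$ edges. For graphs $F$, $H$, $G$, write $F \overset{\text{ind}}{\longrightarrow} (H,G)$ if for every coloring of the edges of $F$ with red and blue there is either a red induced copy of $H$ (a vertex set $S\subseteq V(F)$ with $F[S]\cong H$ and all edges of $F[S]$ red) or a blue induced copy of $G$ (defined analogously with blue). The induced Ramsey number $\mathrm{IR}(H,G)$ is the smallest number of vertices of a graph $F$ with $F \overset{\text{ind}}{\longrightarrow} (H,G)$. *)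

theory Defs
  imports Complex_Main
begin

type_synonym 'a graph = "'a set \<times> ('a \<Rightarrow> 'a \<Rightarrow> bool)"

definition simple_graph :: "'a graph \<Rightarrow> bool" where
  "simple_graph G \<longleftrightarrow> finite (fst G) \<and>
     (\<forall>u v. snd G u v \<longrightarrow> u \<in> fst G \<and> v \<in> fst G) \<and>
     (\<forall>u v. snd G u v \<longrightarrow> snd G v u) \<and> (\<forall>u. \<not> snd G u u)"

definition Kbip :: "nat \<Rightarrow> nat \<Rightarrow> nat graph" where
  "Kbip a b = ({0..<a+b}, \<lambda>u v. (u < a \<and> a \<le> v \<and> v < a + b) \<or> (v < a \<and> a \<le> u \<and> u < a + b))"

definition mono_induced_copy ::
  "'b graph \<Rightarrow> ('b set \<Rightarrow> bool) \<Rightarrow> bool \<Rightarrow> 'a graph \<Rightarrow> bool" where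
  "mono_induced_copy F col c H \<longleftrightarrow>
     (\<exists>f. inj_on f (fst H) \<and> f ` (fst H) \<subseteq> fst F \<and>
        (\<forall>x\<in>fst H. \<forall>y\<in>fst H. snd H x y \<longleftrightarrow> snd F (f x) (f y)) \<and>
        (\<forall>x\<in>fst H. \<forall>y\<in>fst H. snd H x y \<longrightarrow> col {f x, f y} = c))"

text \<open>F -ind-> (H,G); red = True, blue = False.\<close>
definition ind_arrows :: "'b graph \<Rightarrow> 'a graph \<Rightarrow> 'c graph \<Rightarrow> bool" where
  "ind_arrows F H G \<longleftrightarrow>
     (\<forall>col. mono_induced_copy F col True H \<or> mono_induced_copy F col False G)"

text \<open>Induced Ramsey number: least number of vertices of a (simple) graph F with F -ind-> (H,G);
  every finite graph is isomorphic to one on {0..<N}.\<close>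
definition IR :: "'a graph \<Rightarrow> 'c graph \<Rightarrow> nat" where
  "IR H G = (LEAST N. \<exists>E. simple_graph ({0..<N::nat}, E) \<and> ind_arrows ({0..<N}, E) H G)"

end

theory Submission imports Defs begin

lemma card_filter_sum:
  assumes "finite S" shows "card {x\<in>S. P x} = (\<Sum>x\<in>S. if P x then 1 else (0::nat))"
  using sum.inter_filter[OF assms, of "\<lambda>_. (1::nat)" P] by simp

lemma double_count:
  assumes "finite X" "finite Y"
  shows "(\<Sum>x\<in>X. card {y\<in>Y. R x y}) = (\<Sum>y\<in>Y. card {x\<in>X. R x y})"
  using assms by (simp add: card_filter_sum sum.swap[of _ X Y])

lemma greedy:
  fixes R :: "'a \<Rightarrow> 'b \<Rightarrow> bool"
  assumes fA: "finite A" and cA: "card A = m" and fB: "finite B" and cB: "card B = k"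
    and deg: "\<forall>b\<in>B. card {a\<in>A. R b a} \<ge> r + t" and r1: "r \<ge> 1" and k1: "k \<ge> 1"
  shows "i \<le> t \<Longrightarrow> \<exists>B' P. B' \<subseteq> B \<and> P \<subseteq> A \<and> card P = i \<and> (\<forall>b\<in>B'. \<forall>a\<in>P. R b a)
          \<and> card B' * m^i \<ge> k * r^i"
proof (induction i)
  case 0
  then show ?case using cB by (intro exI[of _ B] exI[of _ "{}"]) auto
next
  case (Suc i)
  then obtain B' P where B': "B' \<subseteq> B" "P \<subseteq> A" "card P = i" "\<forall>b\<in>B'. \<forall>a\<in>P. R b a"
    "card B' * m^i \<ge> k * r^i" by auto
  have fB': "finite B'" using B'(1) fB finite_subset by blast
  have fP: "finite P" using B'(2) fA finite_subset by blast
  define A' where "A' = A - P"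
  have fA': "finite A'" using fA A'_def by simp
  have lb: "card {a\<in>A'. R b a} \<ge> r" if "b \<in> B'" for b
  proof -
    have "{a\<in>A. R b a} \<subseteq> {a\<in>A'. R b a} \<union> P" unfolding A'_def by auto
    hence "card {a\<in>A. R b a} \<le> card ({a\<in>A'. R b a} \<union> P)"
      by (intro card_mono) (use fA' fP in auto)
    also have "\<dots> \<le> card {a\<in>A'. R b a} + card P" by (rule card_Un_le)
    finally show ?thesis using deg B'(1) that B'(3) Suc.prems by force
  qed
  have "card B' * r \<le> (\<Sum>b\<in>B'. card {a\<in>A'. R b a})"
    using sum_mono[of B' "\<lambda>_. r" "\<lambda>b. card {a\<in>A'. R b a}"] lb by simp
  also have "\<dots> = (\<Sum>a\<in>A'. card {b\<in>B'. R b a})" by (rule double_count[OF fB' fA'])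
  finally have S: "card B' * r \<le> (\<Sum>a\<in>A'. card {b\<in>B'. R b a})" .
  have "k * r^i \<ge> 1" using k1 r1 by simp
  hence "card B' \<ge> 1" using B'(5) by (metis less_one mult_is_0 not_le le_trans)
  hence "card B' * r \<ge> 1" using r1 by simp
  hence "A' \<noteq> {}" using S by auto
  define g where "g a = card {b\<in>B'. R b a}" for a
  define M where "M = Max (g ` A')"
  have "M \<in> g ` A'" unfolding M_def using fA' \<open>A' \<noteq> {}\<close> by (intro Max_in) auto
  then obtain a0 where a0: "a0 \<in> A'" "g a0 = M" by auto
  have "(\<Sum>a\<in>A'. g a) \<le> card A' * M"
    using sum_bounded_above[of A' g M] fA' unfolding M_def by simp
  also have "card A' \<le> m" using cA fA A'_def by (metis Diff_subset card_mono)
  hence "card A' * M \<le> m * M" by simp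
  finally have S2: "card B' * r \<le> m * g a0" using S a0 g_def by simp
  define B'' where "B'' = {b\<in>B'. R b a0}"
  have "k * r^Suc i = (k * r^i) * r" by simp
  also have "\<dots> \<le> (card B' * m^i) * r" using B'(5) by simp
  also have "\<dots> = (card B' * r) * m^i" by simp
  also have "\<dots> \<le> (m * g a0) * m^i" using S2 by simp
  also have "\<dots> = card B'' * m^Suc i" unfolding g_def B''_def by simp
  finally have fin: "k * r^Suc i \<le> card B'' * m^Suc i" .
  show ?case
  proof (intro exI[of _ B''] exI[of _ "insert a0 P"] conjI)
    show "B'' \<subseteq> B" using B'(1) B''_def by auto
    show "insert a0 P \<subseteq> A" using a0 B'(2) A'_def by auto
    show "card (insert a0 P) = Suc i" using a0 A'_def fP B'(3) by simp
    show "\<forall>b\<in>B''. \<forall>a\<in>insert a0 P. R b a" using B'(4) B''_def by auto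
  qed (rule fin)
qed

lemma fst_Kbip[simp]: "fst (Kbip a b) = {0..<a+b}" by (simp add: Kbip_def)
lemma snd_Kbip[simp]: "snd (Kbip a b) u v = ((u < a \<and> a \<le> v \<and> v < a + b) \<or> (v < a \<and> a \<le> u \<and> u < a + b))"
  by (simp add: Kbip_def)

lemma arrow:
  fixes k m n t r :: nat
  assumes t1: "t \<ge> 1" and r1: "r \<ge> 1" and k1: "k \<ge> 1" and mn: "m + 1 \<ge> n + t + r"
    and big: "k * r^t \<ge> t * m^t"
  shows "ind_arrows (Kbip k m) (Kbip t t) (Kbip 1 n)"
  unfolding ind_arrows_def
proof
  fix col :: "nat set \<Rightarrow> bool"
  define A where "A = {k..<k+m}"
  define B where "B = {0..<k}"
  show "mono_induced_copy (Kbip k m) col True (Kbip t t) \<or> mono_induced_copy (Kbip k m) col False (Kbip 1 n)"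
  proof (cases "\<exists>b\<in>B. n \<le> card {a\<in>A. \<not> col {b,a}}")
    case True
    then obtain b where b: "b \<in> B" "n \<le> card {a\<in>A. \<not> col {b,a}}" by auto
    then obtain S where S: "S \<subseteq> {a\<in>A. \<not> col {b,a}}" "card S = n" "finite S"
      by (meson obtain_subset_with_card_n)
    obtain g where g: "bij_betw g {0..<n} S" using ex_bij_betw_nat_finite[OF S(3)] S(2) by auto
    define f where "f x = (if x = 0 then b else g (x - 1))" for x
    have gS: "g j \<in> S" if "j < n" for j using g that bij_betwE by fastforce
    have gA: "g j \<in> A \<and> \<not> col {b, g j}" if "j < n" for j using gS[OF that] S(1) by auto
    have ginj: "g i = g j \<Longrightarrow> i < n \<Longrightarrow> j < n \<Longrightarrow> i = j" for i j
      using g unfolding bij_betw_def inj_on_def by auto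
    have fx: "f x \<in> A \<and> \<not> col {b, f x}" if "x < 1 + n" "x \<noteq> 0" for x
    proof -
      have "x - 1 < n" using that by auto
      thus ?thesis using gA[of "x - 1"] that f_def by simp
    qed
    have f0: "f 0 = b" using f_def by simp
    have "mono_induced_copy (Kbip k m) col False (Kbip 1 n)"
      unfolding mono_induced_copy_def
    proof (intro exI[of _ f] conjI ballI)
      show "inj_on f (fst (Kbip 1 n))"
      proof (rule inj_onI)
        fix x y assume xy: "x \<in> fst (Kbip 1 n)" "y \<in> fst (Kbip 1 n)" "f x = f y"
        show "x = y"
        proof (cases "x = 0"; cases "y = 0")
          assume "x = 0" "y \<noteq> 0"
          moreover have "y - 1 < n" using xy(2) \<open>y \<noteq> 0\<close> by auto
          ultimately show ?thesis using xy gA[of "y-1"] b(1) A_def B_def f_def by (auto simp del: One_nat_def)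
        next
          assume "x \<noteq> 0" "y = 0"
          moreover have "x - 1 < n" using xy(1) \<open>x \<noteq> 0\<close> by auto
          ultimately show ?thesis using xy gA[of "x-1"] b(1) A_def B_def f_def by (auto simp del: One_nat_def)
        next
          assume "x \<noteq> 0" "y \<noteq> 0"
          moreover have "x - 1 < n" "y - 1 < n" using xy(1,2) \<open>x \<noteq> 0\<close> \<open>y \<noteq> 0\<close> by auto
          moreover have "g (x - 1) = g (y - 1)" using xy(3) calculation f_def by simp
          ultimately have "x - 1 = y - 1" using ginj by blast
          thus ?thesis using \<open>x \<noteq> 0\<close> \<open>y \<noteq> 0\<close> by arith
        qed simp
      qed
      show "f ` fst (Kbip 1 n) \<subseteq> fst (Kbip k m)"
      proof
        fix z assume "z \<in> f ` fst (Kbip 1 n)"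
        then obtain x where "x < 1 + n" "z = f x" by auto
        thus "z \<in> fst (Kbip k m)" using fx[of x] f0 b(1) A_def B_def by (cases "x = 0") auto
      qed
    next
      fix x y assume xy: "x \<in> fst (Kbip 1 n)" "y \<in> fst (Kbip 1 n)"
      show "snd (Kbip 1 n) x y = snd (Kbip k m) (f x) (f y)"
        using xy fx[of x] fx[of y] f0 b(1) A_def B_def by (cases "x = 0"; cases "y = 0") auto
      show "snd (Kbip 1 n) x y \<longrightarrow> col {f x, f y} = False"
        using xy fx[of x] fx[of y] f0 by (cases "x = 0"; cases "y = 0") (auto simp: insert_commute)
    qed
    thus ?thesis by simp
  next
    case False
    define R where "R b a = col {b, a}" for b a
    have deg: "\<forall>b\<in>B. card {a\<in>A. R b a} \<ge> r + t"
    proof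
      fix b assume "b \<in> B"
      hence lt: "card {a\<in>A. \<not> col {b,a}} < n" using False by auto
      have e: "A = {a\<in>A. R b a} \<union> {a\<in>A. \<not> col {b,a}}" unfolding R_def by auto
      have "card A = card {a\<in>A. R b a} + card {a\<in>A. \<not> col {b,a}}"
        apply (subst e) apply (rule card_Un_disjoint) unfolding R_def A_def by auto
      moreover have "card A = m" using A_def by simp
      ultimately show "card {a\<in>A. R b a} \<ge> r + t" using lt mn by linarith
    qed
    obtain B' P where BP: "B' \<subseteq> B" "P \<subseteq> A" "card P = t" "\<forall>b\<in>B'. \<forall>a\<in>P. R b a"
      "card B' * m^t \<ge> k * r^t"
      using greedy[where A=A and m=m and B=B and k=k and R=R and r=r and t=t and i=t] deg r1 k1 A_def B_def by auto
    have "m \<ge> 1" using mn r1 t1 by linarith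
    hence "card B' * m^t \<ge> t * m^t" using BP(5) big by linarith
    hence "card B' \<ge> t" using \<open>m \<ge> 1\<close> by simp
    then obtain T where T: "T \<subseteq> B'" "card T = t" "finite T" by (meson obtain_subset_with_card_n)
    have fP: "finite P" using BP(2) A_def finite_subset by blast
    obtain gT where gT: "bij_betw gT {0..<t} T" using ex_bij_betw_nat_finite[OF T(3)] T(2) by auto
    obtain gP where gP: "bij_betw gP {0..<t} P" using ex_bij_betw_nat_finite[OF fP] BP(3) by auto
    have gTB: "gT j \<in> B'" if "j < t" for j using gT that T(1) bij_betwE by fastforce
    have gPA: "gP j \<in> P" if "j < t" for j using gP that bij_betwE by fastforce
    have gTi: "gT i = gT j \<Longrightarrow> i < t \<Longrightarrow> j < t \<Longrightarrow> i = j" for i j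
      using gT unfolding bij_betw_def inj_on_def by auto
    have gPi: "gP i = gP j \<Longrightarrow> i < t \<Longrightarrow> j < t \<Longrightarrow> i = j" for i j
      using gP unfolding bij_betw_def inj_on_def by auto
    define f where "f x = (if x < t then gT x else gP (x - t))" for x
    have fB: "f x < k" if "x < t" for x using gTB[OF that] BP(1) B_def f_def that by auto
    have fA: "k \<le> f x \<and> f x < k + m" if "t \<le> x" "x < t + t" for x
    proof -
      have "x - t < t" using that by arith
      hence "gP (x - t) \<in> A" using gPA[of "x - t"] BP(2) by auto
      thus ?thesis using that A_def f_def by auto
    qed
    have red: "col {f x, f y}" if "x < t" "t \<le> y" "y < t + t" for x y
    proof -
      have "y - t < t" using that by arith
      thus ?thesis using BP(4) gTB[of x] gPA[of "y - t"] that R_def f_def by auto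
    qed
    have "mono_induced_copy (Kbip k m) col True (Kbip t t)"
      unfolding mono_induced_copy_def
    proof (intro exI[of _ f] conjI ballI)
      show "inj_on f (fst (Kbip t t))"
      proof (rule inj_onI)
        fix x y assume xy: "x \<in> fst (Kbip t t)" "y \<in> fst (Kbip t t)" "f x = f y"
        show "x = y"
        proof (cases "x < t"; cases "y < t")
          assume "x < t" "y < t" thus ?thesis using xy gTi f_def by auto
        next
          assume "x < t" "\<not> y < t" thus ?thesis using xy fB[of x] fA[of y] by auto
        next
          assume "\<not> x < t" "y < t" thus ?thesis using xy fB[of y] fA[of x] by auto
        next
          assume a: "\<not> x < t" "\<not> y < t"
          moreover have "x - t < t" "y - t < t" using xy(1,2) a by auto
          moreover have "gP (x - t) = gP (y - t)" using xy(3) a f_def by simp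
          ultimately have "x - t = y - t" using gPi by blast
          thus ?thesis using a by arith
        qed
      qed
      show "f ` fst (Kbip t t) \<subseteq> fst (Kbip k m)"
      proof
        fix z assume "z \<in> f ` fst (Kbip t t)"
        then obtain x where "x < t + t" "z = f x" by auto
        thus "z \<in> fst (Kbip k m)" using fB[of x] fA[of x] by (cases "x < t") auto
      qed
    next
      fix x y assume xy: "x \<in> fst (Kbip t t)" "y \<in> fst (Kbip t t)"
      show "snd (Kbip t t) x y = snd (Kbip k m) (f x) (f y)"
        using xy fB[of x] fA[of x] fB[of y] fA[of y] by (cases "x < t"; cases "y < t") auto
      show "snd (Kbip t t) x y \<longrightarrow> col {f x, f y} = True"
        using xy red[of x y] red[of y x] by (auto simp: insert_commute)
    qed
    thus ?thesis by simp
  qed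
qed


lemma IR_le:
  assumes "ind_arrows (Kbip k m) H G"
  shows "IR H G \<le> k + m"
proof -
  have sg: "simple_graph (Kbip k m)" unfolding simple_graph_def Kbip_def by auto
  have "\<exists>E. simple_graph ({0..<k+m::nat}, E) \<and> ind_arrows ({0..<k+m}, E) H G"
    using sg assms by (intro exI[of _ "snd (Kbip k m)"]) (simp add: Kbip_def)
  thus ?thesis unfolding IR_def by (rule Least_le)
qed

theorem lemma4:
  fixes t :: nat
  assumes "t \<ge> 2"
  shows "\<exists>c::real. c > 0 \<and> (\<exists>n0::nat. \<forall>n::nat. n > n0 \<longrightarrow>
           real (IR (Kbip t t) (Kbip 1 n)) \<le> real n + c * real n powr (1 - 1 / (2 * real t)))"
proof (intro exI[of _ "8 + 2 * real t + real t * 2^t"] conjI exI[of _ "4^(2*t)"] allI impI)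
  show "0 < 8 + 2 * real t + real t * 2^t" by (simp add: add_pos_nonneg)
  fix n :: nat assume n: "n > 4^(2*t)"
  define e where "e = 1 - 1 / (2 * real t)"
  define x where "x = real n powr (1 / (2 * real t))"
  define q where "q = nat \<lceil>x\<rceil>"
  define s where "s = 4 * (n div q + 1) + 2 * t"
  define k where "k = t * q^t"
  define m where "m = n + s"
  define r where "r = s + 1 - t"
  have t1: "t \<ge> 1" "real t \<ge> 1" using assms by auto
  have "n \<ge> 1" using n by simp
  hence n1: "real n \<ge> 1" by simp
  have "real n > real (4^(2*t))" using n by linarith
  moreover have "(4::real) powr (real (2*t)) = 4^(2*t)" by (rule powr_realpow) simp
  ultimately have "real n > 4 powr (real (2*t))" by simp
  hence "x > (4 powr (real (2*t))) powr (1 / (2 * real t))" unfolding x_def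
    using t1 by (intro powr_less_mono2) auto
  also have "(4 powr (real (2*t))) powr (1 / (2 * real t)) = 4"
    using t1 by (simp add: powr_powr)
  finally have x4: "x > 4" .
  have qx: "real q \<ge> x" "real q \<le> x + 1" unfolding q_def using x4 by linarith+
  have q4: "q \<ge> 4" using qx x4 by linarith
  have "q * s \<ge> 4 * s" using q4 by simp
  moreover have "q * s \<ge> 4 * n"
  proof -
    have a: "n mod q < q" using q4 by simp
    have b: "n = q * (n div q) + n mod q" by simp
    have "n < q * (n div q) + q" using a b by linarith
    hence "n < q * (n div q + 1)" by (simp add: algebra_simps)
    thus ?thesis unfolding s_def by (simp add: algebra_simps)
  qed
  moreover have "2 * r \<ge> s" unfolding r_def s_def by simp
  ultimately have qr: "q * r \<ge> m"
  proof -
    assume a: "q * s \<ge> 4 * s" "q * s \<ge> 4 * n" "2 * r \<ge> s"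
    have "q * s \<le> q * (2 * r)" using a(3) by simp
    hence "4 * s + 4 * n \<le> 2 * (q * r) + 2 * (q * r)" using a(1,2) by linarith
    thus ?thesis unfolding m_def by linarith
  qed
  have "t * m^t \<le> t * (q * r)^t" using qr by (simp add: power_mono)
  also have "\<dots> = k * r^t" unfolding k_def by (simp add: power_mult_distrib)
  finally have big: "t * m^t \<le> k * r^t" .
  have r1: "r \<ge> 1" unfolding r_def s_def by simp
  have k1: "k \<ge> 1" unfolding k_def using t1 q4 by simp
  have mn: "m + 1 \<ge> n + t + r" unfolding m_def r_def s_def by simp
  have IRle: "IR (Kbip t t) (Kbip 1 n) \<le> k + m"
    by (rule IR_le, rule arrow[OF t1(1) r1 k1 mn big])
  have xpos: "x > 0" using x4 by simp
  have ne: "real n powr e \<ge> 1" using n1 unfolding e_def using t1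
    by (intro ge_one_powr_ge_zero) (auto simp: field_simps)
  have d1: "real (n div q) \<le> real n powr e"
  proof -
    have "real (n div q) \<le> real n / real q" by (rule of_nat_div_le_of_nat)
    also have "\<dots> \<le> real n / x" using qx xpos by (intro divide_left_mono) auto
    also have "\<dots> = real n powr e" unfolding e_def x_def using n1
      by (simp add: powr_diff)
    finally show ?thesis .
  qed
  have d2: "real (q^t) \<le> 2^t * real n powr e"
  proof -
    have "real (q^t) = real q ^ t" by simp
    also have "\<dots> \<le> (2 * x)^t" using qx x4 by (intro power_mono) auto
    also have "\<dots> = 2^t * x^t" by (simp add: power_mult_distrib)
    also have "x^t = real n powr (1/2)" unfolding x_def using n1 t1
      by (simp add: powr_power)
    also have "real n powr (1/2) \<le> real n powr e" unfolding e_def using n1 t1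
      by (intro powr_mono) (auto simp: field_simps)
    finally show ?thesis by simp
  qed
  have "real (IR (Kbip t t) (Kbip 1 n)) \<le> real (k + m)" using IRle by linarith
  also have "real (k + m) = real n + 4 * real (n div q) + (4 + 2 * real t) + real t * real (q^t)"
    unfolding k_def m_def s_def by simp
  also have "\<dots> \<le> real n + 4 * real n powr e + (4 + 2 * real t) * real n powr e + real t * (2^t * real n powr e)"
    using d1 d2 ne t1 by (intro add_mono mult_left_mono) auto
  also have "\<dots> = real n + (8 + 2 * real t + real t * 2^t) * real n powr e" by (simp add: algebra_simps)
  finally show "real (IR (Kbip t t) (Kbip 1 n)) \<le> real n + (8 + 2 * real t + real t * 2^t) * real n powr (1 - 1 / (2 * real t))"
    unfolding e_def .
qed

end
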